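(* Let $q$ be a prime power. Then $\mathbb{F}_q$ admits a complete mapping that permutes all elements of $\mathbb{F}_q$ in a single cycle (i.e., of cycle type $x_q$) if and only if $q$ is odd.
   Context: A complete mapping of the field $\mathbb{F}_q$ is a permutation $f$ of $\mathbb{F}_q$ such that $x\mapsto f(x)+x$ is also a permutation of $\mathbb{F}_q$. *)

theory Defs
  imports Main
begin

definition complete_mapping :: "('a::field \<Rightarrow> 'a) \<Rightarrow> bool" where
  "complete_mapping f \<longleftrightarrow> bij f \<and> bij (\<lambda>x. f x + x)"

definition single_cycle :: "('a \<Rightarrow> 'a) \<Rightarrow> bool" where
  "single_cycle f \<longleftrightarrow> bij f \<and> (\<forall>x y. \<exists>n. (f ^^ n) x = y)"

end

theory Submission
  imports Defs "HOL-Number_Theory.Number_Theory" "HOL-Computational_Algebra.Computational_Algebra"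
begin

definition addsub :: "'a::field set \<Rightarrow> bool" where
  "addsub H \<longleftrightarrow> 0 \<in> H \<and> (\<forall>x\<in>H. \<forall>y\<in>H. x + y \<in> H) \<and> (\<forall>x\<in>H. - x \<in> H)"

definition reach :: "('a \<Rightarrow> 'a) \<Rightarrow> 'a \<Rightarrow> 'a \<Rightarrow> bool" where
  "reach g x y \<longleftrightarrow> (\<exists>n. (g ^^ n) x = y)"

lemma reach_refl: "reach g x x"
  unfolding reach_def by (rule exI[of _ 0]) simp

lemma reach_step: "reach g x (g x)"
  unfolding reach_def by (rule exI[of _ 1]) simp

lemma reach_trans: "reach g x y \<Longrightarrow> reach g y z \<Longrightarrow> reach g x z"
  unfolding reach_def by (metis funpow_add comp_apply)

lemma addsub_nat: assumes "addsub H" "x \<in> H" shows "of_nat n * x \<in> H"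
  using assms by (induction n) (auto simp: addsub_def distrib_right)

lemma addsub_diff: assumes "addsub H" "x \<in> H" "y \<in> H" shows "x - y \<in> H"
  using assms unfolding addsub_def by (metis diff_conv_add_uminus)

lemma CHAR_prime_fin: "prime CHAR('a::{field,finite})"
  using prime_CHAR_semidom finite_imp_CHAR_pos[OF finite_UNIV] by blast

lemma CHAR_pos_fin: "CHAR('a::{field,finite}) > 0"
  by (rule finite_imp_CHAR_pos) simp

lemma decomp_unique:
  fixes a :: "'a::{field,finite}"
  assumes H: "addsub H" and a: "a \<notin> H" and h: "h1 \<in> H" "h2 \<in> H"
    and eq: "of_nat u * a + h1 = of_nat v * a + h2"
  shows "(of_nat u :: 'a) = of_nat v \<and> h1 = h2"
proof -
  have main: "(of_nat u :: 'a) = of_nat v"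
    if le: "v \<le> u" and h: "h1 \<in> H" "h2 \<in> H" and eq: "of_nat u * a + h1 = of_nat v * a + h2"
    for u v h1 h2
  proof (rule ccontr)
    assume ne: "(of_nat u :: 'a) \<noteq> of_nat v"
    define k where "k = u - v"
    have uk: "u = v + k" using le k_def by simp
    have kH: "of_nat k * a \<in> H"
    proof -
      have "of_nat k * a = h2 - h1" using eq uk by (simp add: algebra_simps)
      thus ?thesis using addsub_diff[OF H h(2) h(1)] by simp
    qed
    have p: "prime CHAR('a)" by (rule CHAR_prime_fin)
    have "\<not> CHAR('a) dvd k"
    proof
      assume "CHAR('a) dvd k"
      then have "(of_nat k :: 'a) = 0" by (simp add: of_nat_eq_0_iff_char_dvd)
      then show False using ne uk by simp
    qed
    then obtain x y where xy: "k * x = Suc (CHAR('a) * y)" using bezout_prime[OF p] by blast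
    have "a = of_nat (Suc (CHAR('a) * y)) * a" by simp
    also have "\<dots> = of_nat x * (of_nat k * a)"
      by (simp only: xy[symmetric] of_nat_mult) (simp add: ac_simps)
    finally have "a = of_nat x * (of_nat k * a)" .
    then have "a \<in> H" using addsub_nat[OF H kH, of x] by metis
    with a show False ..
  qed
  have "(of_nat u :: 'a) = of_nat v"
    using main[of v u h1 h2] main[of u v h2 h1] h eq by (cases "v \<le> u") auto
  with eq show ?thesis by simp
qed

lemma funpow_in: "f ` H \<subseteq> H \<Longrightarrow> h \<in> H \<Longrightarrow> (f ^^ n) h \<in> H"
  by (induction n) auto

locale odo =
  fixes H :: "'a::{field,finite} set" and a :: 'a
  assumes H: "addsub H" and a: "a \<notin> H"
begin

definition "H' = {of_nat i * a + h | i h. h \<in> H}"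

lemma uniq: "h1 \<in> H \<Longrightarrow> h2 \<in> H \<Longrightarrow> of_nat u * a + h1 = of_nat v * a + h2
   \<Longrightarrow> (of_nat u :: 'a) = of_nat v \<and> h1 = h2"
  using decomp_unique[OF H a] by blast

lemma neg_of_nat: "- (of_nat i :: 'a) = of_nat (i * (CHAR('a) - 1))"
proof -
  have "i * (CHAR('a) - 1) + i = i * CHAR('a)"
    using CHAR_pos_fin[where 'a='a]
    by (cases "CHAR('a)") (auto simp: algebra_simps)
  then have "(of_nat (i * (CHAR('a) - 1)) :: 'a) + of_nat i = 0"
    by (metis of_nat_add of_nat_mult of_nat_CHAR mult_zero_right)
  then show ?thesis by (metis add.commute neg_eq_iff_add_eq_0)
qed

lemma addsub_H': "addsub H'"
  unfolding addsub_def
proof (intro conjI ballI)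
  have "0 \<in> H" using H by (simp add: addsub_def)
  moreover have "(0::'a) = of_nat 0 * a + 0" by simp
  ultimately show "0 \<in> H'" unfolding H'_def by blast
next
  fix x y assume "x \<in> H'" "y \<in> H'"
  then obtain i h j g where x: "x = of_nat i * a + h" "h \<in> H" and y: "y = of_nat j * a + g" "g \<in> H"
    unfolding H'_def by blast
  have "h + g \<in> H" using H x y by (simp add: addsub_def)
  moreover have "x + y = of_nat (i + j) * a + (h + g)" using x y by (simp add: algebra_simps)
  ultimately show "x + y \<in> H'" unfolding H'_def by blast
next
  fix x assume "x \<in> H'"
  then obtain i h where x: "x = of_nat i * a + h" "h \<in> H"
    unfolding H'_def by blast
  have "- h \<in> H" using H x by (simp add: addsub_def)
  moreover have "- x = of_nat (i * (CHAR('a) - 1)) * a + (- h)"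
    using x neg_of_nat[of i] by (metis minus_add_distrib minus_mult_left)
  ultimately show "- x \<in> H'" unfolding H'_def by blast
qed

lemma H_sub: "H \<subseteq> H'"
proof
  fix h assume "h \<in> H"
  moreover have "h = of_nat 0 * a + h" by simp
  ultimately show "h \<in> H'" unfolding H'_def by blast
qed

lemma a_in: "a \<in> H'"
proof -
  have "0 \<in> H" using H by (simp add: addsub_def)
  moreover have "a = of_nat 1 * a + 0" by simp
  ultimately show ?thesis unfolding H'_def by blast
qed

lemma card_H': "card H' = CHAR('a) * card H"
proof -
  let ?p = "CHAR('a)"
  have eqs: "H' = (\<lambda>(i,h). of_nat i * a + h) ` ({..<?p} \<times> H)"
  proof
    show "(\<lambda>(i,h). of_nat i * a + h) ` ({..<?p} \<times> H) \<subseteq> H'" unfolding H'_def by auto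
  next
    show "H' \<subseteq> (\<lambda>(i,h). of_nat i * a + h) ` ({..<?p} \<times> H)"
    proof
      fix x assume "x \<in> H'"
      then obtain i h where x: "x = of_nat i * a + h" "h \<in> H" unfolding H'_def by blast
      have "(of_nat (i mod ?p) :: 'a) = of_nat i"
        by (simp add: of_nat_eq_iff_cong_CHAR cong_def)
      moreover have "i mod ?p < ?p" using CHAR_pos_fin[where 'a='a] by simp
      ultimately show "x \<in> (\<lambda>(i,h). of_nat i * a + h) ` ({..<?p} \<times> H)"
        using x by (auto intro!: image_eqI[of _ _ "(i mod ?p, h)"])
    qed
  qed
  have inj: "inj_on (\<lambda>(i,h). of_nat i * a + h) ({..<?p} \<times> H)"
  proof (rule inj_onI, clarsimp)
    fix i h j g assume "i < ?p" "h \<in> H" "j < ?p" "g \<in> H" "of_nat i * a + h = of_nat j * a + g"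
    then have "(of_nat i :: 'a) = of_nat j" "h = g" using uniq by blast+
    then have "i mod ?p = j mod ?p" by (simp add: of_nat_eq_iff_cong_CHAR cong_def)
    with \<open>i < ?p\<close> \<open>j < ?p\<close> show "i = j \<and> h = g" using \<open>h = g\<close> by simp
  qed
  show ?thesis unfolding eqs by (simp add: card_image[OF inj] card_cartesian_product)
qed

end

locale odo2 = odo +
  fixes f0 :: "'a \<Rightarrow> 'a" and h0 :: 'a
  assumes h0: "h0 \<in> H" and f0H: "f0 ` H \<subseteq> H" and inj0: "inj_on (\<lambda>x. f0 x + x) H"
    and cyc: "\<forall>x\<in>H. \<forall>y\<in>H. reach f0 x y" and podd: "odd CHAR('a)"
begin

definition "cmp x = (THE h. h \<in> H \<and> (\<exists>i. x = of_nat i * a + h))"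

definition "F x = (if cmp x = h0 then x + a + (f0 h0 - h0) else x + (f0 (cmp x) - cmp x))"

lemma cmp_eq: "h \<in> H \<Longrightarrow> cmp (of_nat i * a + h) = h"
  unfolding cmp_def
  by (rule the_equality) (auto dest: uniq)

lemma F_eq: "h \<in> H \<Longrightarrow> F (of_nat i * a + h) =
   (if h = h0 then of_nat (Suc i) * a + f0 h0 else of_nat i * a + f0 h)"
proof -
  assume h: "h \<in> H"
  have c: "cmp (of_nat i * a + h) = h" using cmp_eq[OF h] .
  show ?thesis unfolding F_def c by (simp add: algebra_simps)
qed

lemma F_H': "F ` H' \<subseteq> H'"
proof
  fix y assume "y \<in> F ` H'"
  then obtain i h where y: "y = F (of_nat i * a + h)" "h \<in> H" unfolding H'_def by blast
  have "f0 h \<in> H" "f0 h0 \<in> H" using f0H y h0 by auto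
  show "y \<in> H'"
  proof (cases "h = h0")
    case True
    then have "y = of_nat (Suc i) * a + f0 h0" using y F_eq[OF y(2), of i] by simp
    then show ?thesis unfolding H'_def using \<open>f0 h0 \<in> H\<close> by blast
  next
    case False
    then have "y = of_nat i * a + f0 h" using y F_eq[OF y(2), of i] by simp
    then show ?thesis unfolding H'_def using \<open>f0 h \<in> H\<close> by blast
  qed
qed

lemma two_ne: "(2::'a) \<noteq> 0"
proof
  assume "(2::'a) = 0"
  then have "(of_nat 2 :: 'a) = 0" by simp
  then have "CHAR('a) dvd 2" by (simp only: of_nat_eq_0_iff_char_dvd)
  then have "CHAR('a) \<le> 2" by (simp add: dvd_imp_le)
  moreover have "CHAR('a) \<noteq> 0" "CHAR('a) \<noteq> 1" using CHAR_prime_fin[where 'a='a] by auto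
  ultimately have "CHAR('a) = 2" by linarith
  with podd show False by simp
qed

lemma S_eq: "h \<in> H \<Longrightarrow> F (of_nat i * a + h) + (of_nat i * a + h) =
   of_nat (if h = h0 then Suc (2*i) else 2*i) * a + (f0 h + h)"
proof (cases "h = h0")
  case True
  assume h: "h \<in> H"
  have e: "F (of_nat i * a + h) = of_nat (Suc i) * a + f0 h0" using F_eq[OF h, of i] True by simp
  show ?thesis unfolding e using True by (simp add: algebra_simps)
next
  case False
  assume h: "h \<in> H"
  have e: "F (of_nat i * a + h) = of_nat i * a + f0 h" using F_eq[OF h, of i] False by simp
  show ?thesis unfolding e using False by (simp add: algebra_simps)
qed

lemma gH: "h \<in> H \<Longrightarrow> f0 h + h \<in> H"
  using H f0H by (auto simp: addsub_def)

lemma S_inj: "inj_on (\<lambda>x. F x + x) H'"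
proof (rule inj_onI)
  fix x y assume "x \<in> H'" "y \<in> H'" and eq: "F x + x = F y + y"
  then obtain i h j g where x: "x = of_nat i * a + h" "h \<in> H" and y: "y = of_nat j * a + g" "g \<in> H"
    unfolding H'_def by blast
  have gh: "f0 h + h \<in> H" "f0 g + g \<in> H" using gH x y by auto
  have "of_nat (if h = h0 then Suc (2*i) else 2*i) * a + (f0 h + h) =
        of_nat (if g = h0 then Suc (2*j) else 2*j) * a + (f0 g + g)"
    using eq unfolding x(1) y(1) S_eq[OF x(2)] S_eq[OF y(2)] .
  from uniq[OF gh this] have u1: "(of_nat (if h = h0 then Suc (2*i) else 2*i) :: 'a) =
        of_nat (if g = h0 then Suc (2*j) else 2*j)" and u2: "f0 h + h = f0 g + g" by auto
  have hg: "h = g" using u2 inj0 x y by (auto dest: inj_onD)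
  have "(of_nat (2*i) :: 'a) = of_nat (2*j)"
  proof (cases "h = h0")
    case True
    then have "(of_nat (Suc (2*i)) :: 'a) = of_nat (Suc (2*j))" using u1 hg by simp
    then show ?thesis by simp
  next
    case False
    then show ?thesis using u1 hg by simp
  qed
  then have "2 * (of_nat i :: 'a) = 2 * of_nat j" by simp
  then have "(of_nat i :: 'a) = of_nat j" using two_ne by simp
  then show "x = y" using x y hg by simp
qed

lemma walk: "h \<in> H \<Longrightarrow> (\<forall>j<k. (f0 ^^ j) h \<noteq> h0) \<Longrightarrow>
   (F ^^ k) (of_nat i * a + h) = of_nat i * a + (f0 ^^ k) h"
proof (induction k)
  case 0 then show ?case by simp
next
  case (Suc k)
  have "(F ^^ Suc k) (of_nat i * a + h) = F (of_nat i * a + (f0 ^^ k) h)"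
    using Suc by simp
  also have "\<dots> = of_nat i * a + f0 ((f0 ^^ k) h)"
    using Suc.prems funpow_in[OF f0H Suc.prems(1)] by (simp add: F_eq)
  finally show ?case by simp
qed

lemma R1: "h \<in> H \<Longrightarrow> reach F (of_nat i * a + h) (of_nat i * a + h0)"
proof -
  assume h: "h \<in> H"
  obtain n where "(f0 ^^ n) h = h0" using cyc h h0 unfolding reach_def by blast
  define m where "m = (LEAST n. (f0 ^^ n) h = h0)"
  have m: "(f0 ^^ m) h = h0" unfolding m_def by (rule LeastI) fact
  have "\<forall>j<m. (f0 ^^ j) h \<noteq> h0" unfolding m_def using not_less_Least by blast
  then have "(F ^^ m) (of_nat i * a + h) = of_nat i * a + h0" using walk[OF h] m by simp
  then show ?thesis unfolding reach_def by blast
qed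

lemma R2: "y \<in> H \<Longrightarrow> reach F (of_nat i * a + h0) (of_nat (Suc i) * a + y)"
proof -
  assume y: "y \<in> H"
  have s: "F (of_nat i * a + h0) = of_nat (Suc i) * a + f0 h0" using h0 by (simp add: F_eq)
  have fh: "f0 h0 \<in> H" using f0H h0 by auto
  obtain n where "(f0 ^^ n) (f0 h0) = y" using cyc y fh unfolding reach_def by blast
  define m where "m = (LEAST n. (f0 ^^ n) (f0 h0) = y)"
  have m: "(f0 ^^ m) (f0 h0) = y" unfolding m_def by (rule LeastI) fact
  have "\<forall>j<m. (f0 ^^ j) (f0 h0) \<noteq> h0"
  proof (intro allI impI notI)
    fix j assume j: "j < m" and e: "(f0 ^^ j) (f0 h0) = h0"
    have "y = (f0 ^^ ((m - j) + j)) (f0 h0)" using m j by simp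
    also have "\<dots> = (f0 ^^ (m - j)) h0" by (simp only: funpow_add comp_apply e)
    also have "m - j = Suc (m - Suc j)" using j by simp
    also have "(f0 ^^ Suc (m - Suc j)) h0 = (f0 ^^ (m - Suc j)) (f0 h0)"
      by (simp only: funpow_Suc_right comp_apply)
    finally have "(f0 ^^ (m - Suc j)) (f0 h0) = y" by simp
    then have "m \<le> m - Suc j" unfolding m_def by (rule Least_le)
    with j show False by simp
  qed
  then have "(F ^^ m) (of_nat (Suc i) * a + f0 h0) = of_nat (Suc i) * a + (f0 ^^ m) (f0 h0)"
    by (rule walk[OF fh])
  then have "(F ^^ m) (of_nat (Suc i) * a + f0 h0) = of_nat (Suc i) * a + y"
    using m by simp
  then have "reach F (of_nat (Suc i) * a + f0 h0) (of_nat (Suc i) * a + y)"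
    unfolding reach_def by blast
  then show ?thesis using reach_trans[OF reach_step] s by metis
qed

lemma R3: "reach F (of_nat i * a + h0) (of_nat (i + k) * a + h0)"
proof (induction k)
  case 0 then show ?case by (simp add: reach_refl)
next
  case (Suc k)
  then show ?case using reach_trans[OF Suc R2[OF h0, of "i + k"]] by simp
qed

lemma reach_all: "x \<in> H' \<Longrightarrow> y \<in> H' \<Longrightarrow> reach F x y"
proof -
  assume "x \<in> H'" "y \<in> H'"
  then obtain i h j g where x: "x = of_nat i * a + h" "h \<in> H" and y: "y = of_nat j * a + g" "g \<in> H"
    unfolding H'_def by blast
  let ?p = "CHAR('a)"
  define k where "k = j + (?p - 1) + i * (?p - 1)"
  have p1: "?p \<ge> 1" using CHAR_pos_fin[where 'a='a] by simp
  have "Suc (i + k) = j + ?p * Suc i"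
    unfolding k_def using p1 by (cases ?p) (auto simp: algebra_simps)
  then have "(of_nat (Suc (i + k)) :: 'a) = of_nat j" by simp
  then have "reach F (of_nat (i + k) * a + h0) y" using R2[OF y(2), of "i + k"] y by simp
  then show ?thesis using reach_trans[OF R1[OF x(2), of i] reach_trans[OF R3]] x by blast
qed

end

definition good :: "'a::{field,finite} set \<Rightarrow> bool" where
  "good H \<longleftrightarrow> addsub H \<and> (\<exists>k. card H = CHAR('a) ^ k) \<and>
     (odd CHAR('a) \<longrightarrow> (\<exists>f0 h0. h0 \<in> H \<and> f0 ` H \<subseteq> H \<and> inj_on (\<lambda>x. f0 x + x) H \<and>
        (\<forall>x\<in>H. \<forall>y\<in>H. reach f0 x y)))"

lemma good_step:
  fixes H :: "'a::{field,finite} set"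
  assumes g: "good H" and a: "a \<notin> H"
  shows "good (odo.H' H a)"
proof -
  have H: "addsub H" using g by (simp add: good_def)
  interpret odo H a using H a by unfold_locales
  obtain k where k: "card H = CHAR('a) ^ k" using g by (auto simp: good_def)
  have c: "card H' = CHAR('a) ^ Suc k" using card_H' k by simp
  have f: "\<exists>f0 h0. h0 \<in> H' \<and> f0 ` H' \<subseteq> H' \<and> inj_on (\<lambda>x. f0 x + x) H' \<and>
        (\<forall>x\<in>H'. \<forall>y\<in>H'. reach f0 x y)" if po: "odd CHAR('a)"
  proof -
    obtain f0 h0 where *: "h0 \<in> H" "f0 ` H \<subseteq> H" "inj_on (\<lambda>x. f0 x + x) H"
        "\<forall>x\<in>H. \<forall>y\<in>H. reach f0 x y" using g po by (auto simp: good_def)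
    interpret odo2 H a f0 h0 using * po by unfold_locales auto
    show ?thesis using F_H' S_inj reach_all a_in by blast
  qed
  show ?thesis unfolding good_def using addsub_H' c f by blast
qed

lemma good_zero: "good ({0} :: 'a::{field,finite} set)"
  unfolding good_def addsub_def
  by (auto intro!: exI[of _ 0] exI[of _ id] simp: reach_refl)

lemma good_UNIV: "good (UNIV :: 'a::{field,finite} set)"
proof -
  have "\<forall>H :: 'a set. good H \<longrightarrow> card (- H) = n \<longrightarrow> good (UNIV :: 'a set)" for n
  proof (induction n rule: less_induct)
    case (less n)
    show ?case
    proof (intro allI impI)
      fix H :: "'a set" assume g: "good H" and n: "card (- H) = n"
      show "good (UNIV :: 'a set)"
      proof (cases "H = UNIV")
        case True then show ?thesis using g by simp
      next
        case False
        then obtain a where a: "a \<notin> H" by blast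
        have H: "addsub H" using g by (simp add: good_def)
        interpret odo H a using H a by unfold_locales
        have "- H' \<subset> - H" using H_sub a_in a by blast
        then have "card (- H') < card (- H)" by (rule psubset_card_mono[OF finite])
        then show ?thesis using less n good_step[OF g a] by blast
      qed
    qed
  qed
  then show ?thesis using good_zero by blast
qed

theorem corollary1p5:
  shows "(\<exists>f :: 'a::{field,finite} \<Rightarrow> 'a. complete_mapping f \<and> single_cycle f)
           \<longleftrightarrow> odd (card (UNIV :: 'a set))"
proof
  assume "\<exists>f :: 'a \<Rightarrow> 'a. complete_mapping f \<and> single_cycle f"
  then obtain f :: "'a \<Rightarrow> 'a" where cm: "complete_mapping f" and sc: "single_cycle f" by blast
  show "odd (card (UNIV :: 'a set))"
  proof (rule ccontr)
    assume ev: "\<not> odd (card (UNIV :: 'a set))"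
    obtain k where k: "card (UNIV :: 'a set) = CHAR('a) ^ k" using good_UNIV[where 'a='a]
      by (auto simp: good_def)
    have "\<not> odd CHAR('a)" using ev k by simp
    moreover have "prime CHAR('a)" by (rule CHAR_prime_fin)
    ultimately have p2: "CHAR('a) = 2" using prime_odd_nat by (metis prime_ge_2_nat le_neq_implies_less)
    have "surj (\<lambda>x. f x + x)" using cm by (simp add: complete_mapping_def bij_def)
    then obtain x where "0 = f x + x" by blast
    then have "f x = - x" by (simp add: eq_neg_iff_add_eq_0)
    then have fx: "f x = x" using uminus_CHAR_2[OF p2] by simp
    have fixp: "(f ^^ n) x = x" for n by (induction n) (simp_all add: fx)
    obtain n where "(f ^^ n) x = x + 1" using sc by (auto simp: single_cycle_def)
    then show False using fixp[of n] by simp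
  qed
next
  assume od: "odd (card (UNIV :: 'a set))"
  have po: "odd CHAR('a)" using od CHAR_dvd_CARD[where 'a='a] by (metis dvd_trans)
  obtain f0 h0 where *: "inj_on (\<lambda>x. f0 x + x) (UNIV :: 'a set)"
      "\<forall>x \<in> UNIV. \<forall>y \<in> UNIV. reach f0 x y"
    using good_UNIV[where 'a='a] po unfolding good_def by blast
  have sf: "surj f0"
  proof -
    have "y \<in> range f0" for y
    proof -
      obtain n where n: "(f0 ^^ n) (f0 y) = y" using * unfolding reach_def by blast
      show ?thesis
      proof (cases n)
        case 0 then show ?thesis using n by (metis funpow_0 rangeI)
      next
        case (Suc m)
        then have "y = f0 ((f0 ^^ m) (f0 y))" using n by simp
        then show ?thesis by blast
      qed
    qed
    then show ?thesis by blast
  qed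
  have bf: "bij f0" using sf finite_UNIV_surj_inj[OF finite_UNIV] by (simp add: bij_def)
  have bs: "bij (\<lambda>x. f0 x + x)" using *(1) finite_UNIV_inj_surj[OF finite_UNIV] by (simp add: bij_def)
  have "complete_mapping f0 \<and> single_cycle f0"
    using bf bs *(2) by (simp add: complete_mapping_def single_cycle_def reach_def)
  then show "\<exists>f :: 'a \<Rightarrow> 'a. complete_mapping f \<and> single_cycle f" by blast
qed

end
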